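(* Let $p$ be a prime, $k \ge 1$ an integer, $q = p^k$, and $n = q^2 + q + 1$. Let $P$ be the set of points of the projective plane over the finite field $\mathbb{F}_q$ (the one-dimensional subspaces of $\mathbb{F}_q^3$; $|P| = n$), and let $L_1, \dots, L_n \subseteq P$ be its lines (for each nonzero $u \in \mathbb{F}_q^3$ up to scalar, the line $\{[v] \in P : u_1v_1 + u_2v_2 + u_3v_3 = 0\}$), each identified with its set of points. Identify the $n$ partitions with the points of $P$. Let $G = (V, E)$ be a finite graph and let $\psi : V \to \{L_1, \dots, L_n\}$ be any map. An FPP partition of $G$ is an assignment of each edge $\{u, v\} \in E$ to a partition (point) in $\psi(u) \cap \psi(v)$ (this intersection is a single point if $\psi(u) \neq \psi(v)$, and is the whole line $\psi(u)$ if $\psi(u) = \psi(v)$). For each point $x \in P$ let $E_x$ be the set of edges assigned to $x$, and let $RF = \frac{\sum_{x \in P} |V(E_x)|}{|V|}$, where $V(E_x)$ is the set of vertices incident to at least one edge of $E_x$. Then $RF \le q + 1$, and $\sqrt{n} \le q + 1 \le \sqrt{n} + 1$; in particular $RF \le \sqrt{n} + 1$.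
   Context: Every line of the projective plane over $\mathbb{F}_q$ contains exactly $q+1$ points, and any two distinct lines meet in exactly one point. *)

theory Defs
  imports Complex_Main "HOL-Computational_Algebra.Primes" "HOL-Library.Cardinality"
begin

text \<open>Vectors of F_q^3 are triples. A point of the projective plane PG(2,q) is a
one-dimensional subspace of F_q^3, represented as the set of its vectors.\<close>

definition proj_points :: "('a::field \<times> 'a \<times> 'a) set set" where
  "proj_points = {{(c * a, c * b, c * d) | c. True} | a b d. (a, b, d) \<noteq> (0, 0, 0)}"

definition dot3 :: "'a::field \<times> 'a \<times> 'a \<Rightarrow> 'a \<times> 'a \<times> 'a \<Rightarrow> 'a" where
  "dot3 u v = fst u * fst v + fst (snd u) * fst (snd v) + snd (snd u) * snd (snd v)"

definition proj_line :: "'a::field \<times> 'a \<times> 'a \<Rightarrow> ('a \<times> 'a \<times> 'a) set set" where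
  "proj_line u = {x \<in> proj_points. \<forall>v \<in> x. dot3 u v = 0}"

definition proj_lines :: "('a::field \<times> 'a \<times> 'a) set set set" where
  "proj_lines = {proj_line u | u. u \<noteq> (0, 0, 0)}"

definition finite_graph :: "'v set \<Rightarrow> 'v set set \<Rightarrow> bool" where
  "finite_graph V E \<longleftrightarrow> finite V \<and> (\<forall>e \<in> E. e \<subseteq> V \<and> card e = 2)"

definition FPP_partition ::
  "'v set set \<Rightarrow> ('v \<Rightarrow> ('a::field \<times> 'a \<times> 'a) set set) \<Rightarrow> ('v set \<Rightarrow> ('a \<times> 'a \<times> 'a) set) \<Rightarrow> bool" where
  "FPP_partition E \<psi> f \<longleftrightarrow> (\<forall>u v. {u, v} \<in> E \<longrightarrow> f {u, v} \<in> \<psi> u \<inter> \<psi> v)"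

definition RF ::
  "'v set \<Rightarrow> 'v set set \<Rightarrow> ('v set \<Rightarrow> ('a::field \<times> 'a \<times> 'a) set) \<Rightarrow> real" where
  "RF V E f = (\<Sum>x \<in> proj_points. real (card (\<Union> {e \<in> E. f e = x}))) / real (card V)"

end

theory Submission
  imports Defs
begin

definition spn :: "'a::field \<times> 'a \<times> 'a \<Rightarrow> ('a \<times> 'a \<times> 'a) set" where
  "spn v = {(t * fst v, t * fst (snd v), t * snd (snd v)) | t. True}"

lemma span_eq:
  fixes x :: "('a::field \<times> 'a \<times> 'a) set"
  assumes "x \<in> proj_points" "v \<in> x" "v \<noteq> (0,0,0)"
  shows "x = spn v"
proof -
  obtain a b d where x: "x = {(c * a, c * b, c * d) | c. True}" and nz: "(a,b,d) \<noteq> (0,0,0)"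
    using assms(1) unfolding proj_points_def by blast
  obtain s where v: "v = (s*a, s*b, s*d)" using assms(2) x by blast
  have s: "s \<noteq> 0" using v assms(3) by auto
  show ?thesis
  proof
    show "x \<subseteq> spn v"
    proof
      fix y assume "y \<in> x"
      then obtain t where y: "y = (t*a, t*b, t*d)" using x by blast
      have "y = ((t/s) * fst v, (t/s) * fst (snd v), (t/s) * snd (snd v))"
        using s by (simp add: v y)
      then show "y \<in> spn v" unfolding spn_def by blast
    qed
  next
    show "spn v \<subseteq> x"
    proof
      fix y assume "y \<in> spn v"
      then obtain t where y: "y = (t * fst v, t * fst (snd v), t * snd (snd v))"
        unfolding spn_def by blast
      have "y = ((t*s)*a, (t*s)*b, (t*s)*d)" by (simp add: y v mult.assoc)
      then show "y \<in> x" using x by blast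
    qed
  qed
qed

lemma pt_nz:
  fixes x :: "('a::field \<times> 'a \<times> 'a) set"
  assumes "x \<in> proj_points"
  obtains w where "w \<in> x" "w \<noteq> (0,0,0)"
proof -
  obtain a b d where x: "x = {(c * a, c * b, c * d) | c. True}" and nz: "(a,b,d) \<noteq> (0,0,0)"
    using assms(1) unfolding proj_points_def by blast
  have "(1*a,1*b,1*d) \<in> x" using x by blast
  then show ?thesis using that nz by auto
qed

lemma spn_mem: "(t * fst v, t * fst (snd v), t * snd (snd v)) \<in> spn v"
  unfolding spn_def by blast

lemma line_card3:
  fixes a b c :: "'a::{finite,field}"
  assumes c: "c \<noteq> 0"
  shows "card (proj_line (a,b,c)) \<le> CARD('a) + 1"
proof -
  define g where "g x = (if \<exists>v\<in>x. fst v = 1 then Some (fst (snd (SOME v. v\<in>x \<and> fst v = 1))) else None)"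
    for x :: "('a \<times> 'a \<times> 'a) set"
  have ker: "a * fst v + b * fst (snd v) + c * snd (snd v) = 0" if "x \<in> proj_line (a,b,c)" "v \<in> x" for x v
    using that unfolding proj_line_def dot3_def by auto
  have inj: "inj_on g (proj_line (a,b,c))"
  proof (rule inj_onI)
    fix x y assume xl: "x \<in> proj_line (a,b,c)" and yl: "y \<in> proj_line (a,b,c)" and g: "g x = g y"
    have xp: "x \<in> proj_points" and yp: "y \<in> proj_points" using xl yl unfolding proj_line_def by auto
    show "x = y"
    proof (cases "\<exists>v\<in>x. fst v = 1")
      case True
      hence gx: "g x = Some (fst (snd (SOME v. v\<in>x \<and> fst v = 1)))" by (simp add: g_def)
      then have T2: "\<exists>v\<in>y. fst v = 1" using g by (auto simp: g_def split: if_splits)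
      hence gy: "g y = Some (fst (snd (SOME v. v\<in>y \<and> fst v = 1)))" by (simp add: g_def)
      define v where "v = (SOME v. v\<in>x \<and> fst v = 1)"
      define w where "w = (SOME v. v\<in>y \<and> fst v = 1)"
      have v: "v \<in> x" "fst v = 1" proof -
        have "\<exists>v. v\<in>x \<and> fst v = 1" using True by blast
        from someI_ex[OF this] show "v \<in> x" "fst v = 1" unfolding v_def by auto
      qed
      have w: "w \<in> y" "fst w = 1" proof -
        have "\<exists>v. v\<in>y \<and> fst v = 1" using T2 by blast
        from someI_ex[OF this] show "w \<in> y" "fst w = 1" unfolding w_def by auto
      qed
      have e2: "fst (snd v) = fst (snd w)" using g gx gy v_def w_def by simp
      have kv: "a + b * fst (snd v) + c * snd (snd v) = 0" using ker[OF xl v(1)] v(2) by simp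
      have kw: "a + b * fst (snd v) + c * snd (snd w) = 0" using ker[OF yl w(1)] w(2) e2 by simp
      have "c * snd (snd v) = c * snd (snd w)" using kv kw by (metis add_left_cancel add.assoc add.commute)
      hence "snd (snd v) = snd (snd w)" using c by simp
      hence vw: "v = w" using v(2) w(2) e2 by (simp add: prod_eq_iff)
      have "x = spn v" by (rule span_eq[OF xp v(1)]) (use v(2) in auto)
      moreover have "y = spn w" by (rule span_eq[OF yp w(1)]) (use w(2) in auto)
      ultimately show ?thesis using vw by simp
    next
      case False
      hence F2: "\<not> (\<exists>v\<in>y. fst v = 1)" using g by (auto simp: g_def split: if_splits)
      have key: "\<exists>v\<in>z. v = (0, 1, - b / c)" if zl: "z \<in> proj_line (a,b,c)" and nf: "\<not> (\<exists>v\<in>z. fst v = 1)" for z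
      proof -
        have zp: "z \<in> proj_points" using zl unfolding proj_line_def by auto
        obtain w where w: "w \<in> z" "w \<noteq> (0,0,0)" using pt_nz[OF zp] by blast
        have zs: "z = spn w" by (rule span_eq[OF zp w])
        have w1: "fst w = 0"
        proof (rule ccontr)
          assume "fst w \<noteq> 0"
          hence "fst ((1/fst w) * fst w, (1/fst w) * fst (snd w), (1/fst w) * snd (snd w)) = 1" by simp
          moreover have "((1/fst w) * fst w, (1/fst w) * fst (snd w), (1/fst w) * snd (snd w)) \<in> z"
            using zs spn_mem by metis
          ultimately show False using nf by blast
        qed
        have kw: "b * fst (snd w) + c * snd (snd w) = 0" using ker[OF zl w(1)] w1 by simp
        have w2: "fst (snd w) \<noteq> 0"
        proof
          assume "fst (snd w) = 0"
          hence "snd (snd w) = 0" using kw c by simp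
          thus False using w(2) w1 \<open>fst (snd w) = 0\<close> by (simp add: prod_eq_iff)
        qed
        define t where "t = 1 / fst (snd w)"
        have m: "(t * fst w, t * fst (snd w), t * snd (snd w)) \<in> z" using zs spn_mem by metis
        have "t * snd (snd w) = - b / c"
        proof -
          have "snd (snd w) = - b * fst (snd w) / c" using kw c by (simp add: field_simps eq_neg_iff_add_eq_0[symmetric])
          thus ?thesis using w2 c by (simp add: t_def field_simps)
        qed
        hence "(t * fst w, t * fst (snd w), t * snd (snd w)) = (0, 1, -b/c)" using w1 w2 by (simp add: t_def)
        thus ?thesis using m by metis
      qed
      have v0: "(0,1,-b/c) \<in> x" using key[OF xl False] by blast
      have w0: "(0,1,-b/c) \<in> y" using key[OF yl F2] by blast
      have "x = spn (0,1,-b/c)" by (rule span_eq[OF xp v0]) simp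
      moreover have "y = spn (0,1,-b/c)" by (rule span_eq[OF yp w0]) simp
      ultimately show ?thesis by simp
    qed
  qed
  have "card (proj_line (a,b,c)) = card (g ` proj_line (a,b,c))" using card_image[OF inj] by simp
  also have "\<dots> \<le> card (UNIV :: 'a option set)" by (rule card_mono) auto
  also have "\<dots> = CARD('a) + 1" by (simp add: card_UNIV_option)
  finally show ?thesis .
qed

lemma line_perm:
  fixes \<sigma> :: "'a::{finite,field} \<times> 'a \<times> 'a \<Rightarrow> 'a \<times> 'a \<times> 'a"
  assumes inv: "\<And>v. \<sigma> (\<sigma> v) = v" and dt: "\<And>u v. dot3 (\<sigma> u) (\<sigma> v) = dot3 u v"
    and pp: "\<And>x. x \<in> proj_points \<Longrightarrow> \<sigma> ` x \<in> proj_points"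
  shows "card (proj_line u) \<le> card (proj_line (\<sigma> u))"
proof -
  have "proj_line u \<subseteq> (\<lambda>x. \<sigma> ` x) ` proj_line (\<sigma> u)"
  proof
    fix x assume x: "x \<in> proj_line u"
    have "\<sigma> ` x \<in> proj_line (\<sigma> u)" using x pp dt unfolding proj_line_def by auto
    moreover have "x = \<sigma> ` (\<sigma> ` x)" using inv by (simp add: image_image)
    ultimately show "x \<in> (\<lambda>x. \<sigma> ` x) ` proj_line (\<sigma> u)" by blast
  qed
  hence "card (proj_line u) \<le> card ((\<lambda>x. \<sigma> ` x) ` proj_line (\<sigma> u))" by (intro card_mono) auto
  also have "\<dots> \<le> card (proj_line (\<sigma> u))" by (rule card_image_le) simp
  finally show ?thesis .
qed

lemma line_card:
  fixes u :: "'a::{finite,field} \<times> 'a \<times> 'a"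
  assumes "u \<noteq> (0,0,0)"
  shows "card (proj_line u) \<le> CARD('a) + 1"
proof -
  obtain a b c where u: "u = (a,b,c)" by (cases u) auto
  show ?thesis
  proof (cases "c = 0")
    case False thus ?thesis using line_card3 u by blast
  next
    case c0: True
    show ?thesis
    proof (cases "b = 0")
      case False
      define \<sigma> where "\<sigma> = (\<lambda>(v1::'a,v2::'a,v3::'a). (v1,v3,v2))"
      have "card (proj_line u) \<le> card (proj_line (\<sigma> u))"
      proof (rule line_perm)
        fix x :: "('a \<times> 'a \<times> 'a) set" assume "x \<in> proj_points"
        then obtain a b d where x: "x = {(c * a, c * b, c * d) | c. True}" and nz: "(a,b,d) \<noteq> (0,0,0)"
          unfolding proj_points_def by blast
        have "\<sigma> ` x = {(c * a, c * d, c * b) | c. True}" unfolding x \<sigma>_def by (auto simp: image_iff; blast)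
        moreover have "(a,d,b) \<noteq> (0,0,0)" using nz by auto
        ultimately show "\<sigma> ` x \<in> proj_points" unfolding proj_points_def by blast
      qed (auto simp: \<sigma>_def dot3_def split: prod.splits)
      also have "\<dots> \<le> CARD('a) + 1" using line_card3[of b a 0] False by (simp add: u \<sigma>_def c0)
      finally show ?thesis .
    next
      case b0: True
      hence a: "a \<noteq> 0" using assms u c0 by auto
      define \<sigma> where "\<sigma> = (\<lambda>(v1::'a,v2::'a,v3::'a). (v3,v2,v1))"
      have "card (proj_line u) \<le> card (proj_line (\<sigma> u))"
      proof (rule line_perm)
        fix x :: "('a \<times> 'a \<times> 'a) set" assume "x \<in> proj_points"
        then obtain a b d where x: "x = {(c * a, c * b, c * d) | c. True}" and nz: "(a,b,d) \<noteq> (0,0,0)"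
          unfolding proj_points_def by blast
        have "\<sigma> ` x = {(c * d, c * b, c * a) | c. True}" unfolding x \<sigma>_def by (auto simp: image_iff; blast)
        moreover have "(d,b,a) \<noteq> (0,0,0)" using nz by auto
        ultimately show "\<sigma> ` x \<in> proj_points" unfolding proj_points_def by blast
      qed (auto simp: \<sigma>_def dot3_def algebra_simps split: prod.splits)
      also have "\<sigma> u = (0,0,a)" by (simp add: u \<sigma>_def c0 b0)
      also have "card (proj_line (0,0,a)) \<le> CARD('a) + 1" by (rule line_card3[OF a])
      finally show ?thesis .
    qed
  qed
qed

lemma card_filter_sum: "finite A \<Longrightarrow> card {x \<in> A. P x} = (\<Sum>x\<in>A. if P x then 1 else 0)"
  by (simp add: sum.inter_filter[symmetric])

lemma sum_bound:
  fixes V :: "'v set" and E :: "'v set set"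
    and \<psi> :: "'v \<Rightarrow> ('a::{finite, field} \<times> 'a \<times> 'a) set set"
    and f :: "'v set \<Rightarrow> ('a \<times> 'a \<times> 'a) set"
  assumes G: "finite_graph V E"
    and L: "\<forall>v \<in> V. \<psi> v \<in> proj_lines"
    and F: "FPP_partition E \<psi> f"
  shows "(\<Sum>x \<in> proj_points. card (\<Union> {e \<in> E. f e = x})) \<le> card V * (CARD('a) + 1)"
proof -
  have fV: "finite V" using G unfolding finite_graph_def by auto
  let ?P = "proj_points :: ('a \<times> 'a \<times> 'a) set set"
  define A where "A v = {f e | e. e \<in> E \<and> v \<in> e}" for v
  have Asub: "A v \<subseteq> \<psi> v" if "v \<in> V" for v
  proof
    fix x assume "x \<in> A v"
    then obtain e where e: "e \<in> E" "v \<in> e" "x = f e" unfolding A_def by blast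
    have "card e = 2" using G e(1) unfolding finite_graph_def by auto
    then obtain a b where ab: "e = {a,b}" by (meson card_2_iff)
    show "x \<in> \<psi> v"
    proof (cases "v = a")
      case True thus ?thesis using F e ab unfolding FPP_partition_def by auto
    next
      case False
      hence "v = b" using ab e by auto
      hence "e = {v, a}" using ab by auto
      thus ?thesis using F e unfolding FPP_partition_def by auto
    qed
  qed
  have sub: "\<Union> {e \<in> E. f e = x} \<subseteq> {v \<in> V. x \<in> A v}" for x
    using G unfolding finite_graph_def A_def by blast
  have "(\<Sum>x \<in> ?P. card (\<Union> {e \<in> E. f e = x})) \<le> (\<Sum>x \<in> ?P. card {v \<in> V. x \<in> A v})"
    by (intro sum_mono card_mono) (use fV sub in auto)
  also have "\<dots> = (\<Sum>x \<in> ?P. \<Sum>v \<in> V. if x \<in> A v then 1 else 0)"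
    using fV by (simp add: card_filter_sum)
  also have "\<dots> = (\<Sum>v \<in> V. \<Sum>x \<in> ?P. if x \<in> A v then 1 else 0)" by (rule sum.swap)
  also have "\<dots> = (\<Sum>v \<in> V. card {x \<in> ?P. x \<in> A v})" by (simp add: card_filter_sum)
  also have "\<dots> \<le> (\<Sum>v \<in> V. CARD('a) + 1)"
  proof (rule sum_mono)
    fix v assume v: "v \<in> V"
    obtain u where u: "u \<noteq> (0,0,0)" "\<psi> v = proj_line u" using L v unfolding proj_lines_def by blast
    have "card {x \<in> ?P. x \<in> A v} \<le> card (\<psi> v)" by (rule card_mono) (use Asub[OF v] in auto)
    also have "\<dots> \<le> CARD('a) + 1" using line_card[OF u(1)] u(2) by simp
    finally show "card {x \<in> ?P. x \<in> A v} \<le> CARD('a) + 1" .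
  qed
  also have "\<dots> = card V * (CARD('a) + 1)" by simp
  finally show ?thesis .
qed

theorem theorem4:
  fixes p k :: nat
    and V :: "'v set" and E :: "'v set set"
    and \<psi> :: "'v \<Rightarrow> ('a::{finite, field} \<times> 'a \<times> 'a) set set"
    and f :: "'v set \<Rightarrow> ('a \<times> 'a \<times> 'a) set"
  assumes "prime p" and "k \<ge> 1" and "CARD('a) = p ^ k"
    and "finite_graph V E"
    and "\<forall>v \<in> V. \<psi> v \<in> proj_lines"
    and "FPP_partition E \<psi> f"
  shows "RF V E f \<le> real CARD('a) + 1
       \<and> sqrt (real (CARD('a)^2 + CARD('a) + 1)) \<le> real CARD('a) + 1
       \<and> real CARD('a) + 1 \<le> sqrt (real (CARD('a)^2 + CARD('a) + 1)) + 1
       \<and> RF V E f \<le> sqrt (real (CARD('a)^2 + CARD('a) + 1)) + 1"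
proof -
  define q where "q = real CARD('a)"
  have S: "real (\<Sum>x \<in> (proj_points :: ('a \<times> 'a \<times> 'a) set set). card (\<Union> {e \<in> E. f e = x})) \<le> real (card V) * (q + 1)"
  proof -
    have "real (\<Sum>x \<in> (proj_points :: ('a \<times> 'a \<times> 'a) set set). card (\<Union> {e \<in> E. f e = x})) \<le> real (card V * (CARD('a) + 1))"
      by (rule of_nat_mono[OF sum_bound[OF assms(4-6)]])
    thus ?thesis unfolding q_def by (simp add: algebra_simps)
  qed
  have R: "RF V E f \<le> q + 1"
  proof (cases "card V = 0")
    case True thus ?thesis unfolding RF_def q_def by simp
  next
    case False
    hence pos: "real (card V) > 0" by simp
    have "RF V E f = real (\<Sum>x \<in> (proj_points :: ('a \<times> 'a \<times> 'a) set set). card (\<Union> {e \<in> E. f e = x})) / real (card V)"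
      unfolding RF_def by simp
    also have "\<dots> \<le> q + 1" using S pos by (simp add: divide_le_eq mult.commute)
    finally show ?thesis .
  qed
  have q0: "q \<ge> 0" unfolding q_def by simp
  have e: "real (CARD('a)^2 + CARD('a) + 1) = q^2 + q + 1" unfolding q_def by simp
  have s1: "sqrt (q^2 + q + 1) \<le> q + 1"
    by (rule real_le_lsqrt) (use q0 in \<open>auto simp: power2_eq_square algebra_simps\<close>)
  have s2: "q \<le> sqrt (q^2 + q + 1)"
    by (rule real_le_rsqrt) (use q0 in auto)
  show ?thesis unfolding e using R s1 s2 unfolding q_def by linarith
qed

end
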